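(* Fix an $s \times t$ matrix $A$. There exists a polynomial $p$ (depending only on $A$) such that for every $\epsilon > 0$, with $\delta = 1/p(\epsilon^{-1})$: if an $s \times n$ matrix $T$ contains $\epsilon n$ pairwise-disjoint copies of $A$, then the total number of copies of $A$ in $T$ is at least $\delta n^t$.
   Context: Matrices have ordered rows and columns. A copy of $A$ in $T$ is an $s\times t$ submatrix of $T$ (obtained by selecting $t$ columns $c_1<\dots<c_t$, keeping all $s$ rows, in order) equal to $A$; copies are pairwise disjoint if no entry of $T$ lies in two of them. *)

theory Defs
  imports "HOL-Computational_Algebra.Polynomial"
begin

text \<open>Matrices are functions from (row, column) indices to entries; only entries with
row < s and column < (number of columns) are meaningful. A copy of the s x t matrix A in the
s x n matrix T is determined by its set C of t columns c_1 < ... < c_t (all s rows kept);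
the j-th smallest element of C is sorted_list_of_set C ! j.\<close>

definition is_copy ::
  "(nat \<Rightarrow> nat \<Rightarrow> 'a) \<Rightarrow> nat \<Rightarrow> nat \<Rightarrow> (nat \<Rightarrow> nat \<Rightarrow> 'a) \<Rightarrow> nat \<Rightarrow> nat set \<Rightarrow> bool"
  where
  "is_copy A s t T n C \<longleftrightarrow>
     C \<subseteq> {..<n} \<and> card C = t \<and>
     (\<forall>i<s. \<forall>j<t. T i (sorted_list_of_set C ! j) = A i j)"

definition copy_entries :: "nat \<Rightarrow> nat set \<Rightarrow> (nat \<times> nat) set" where
  "copy_entries s C = {..<s} \<times> C"

definition num_copies ::
  "(nat \<Rightarrow> nat \<Rightarrow> 'a) \<Rightarrow> nat \<Rightarrow> nat \<Rightarrow> (nat \<Rightarrow> nat \<Rightarrow> 'a) \<Rightarrow> nat \<Rightarrow> nat" where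
  "num_copies A s t T n = card {C. is_copy A s t T n C}"

end

theory Submission
  imports Defs
begin

lemma comb_count:
  fixes F :: "nat set set" and P :: "nat \<Rightarrow> nat \<Rightarrow> bool"
  assumes fin: "finite F"
    and disj: "\<And>C D. C \<in> F \<Longrightarrow> D \<in> F \<Longrightarrow> C \<noteq> D \<Longrightarrow> C \<inter> D = {}"
    and sub: "\<And>C. C \<in> F \<Longrightarrow> C \<subseteq> {..<n} \<and> card C = t"
    and good: "\<And>C j. C \<in> F \<Longrightarrow> j < t \<Longrightarrow> P j (sorted_list_of_set C ! j)"
  shows "card F choose t \<le> card {C. C \<subseteq> {..<n} \<and> card C = t \<and> (\<forall>j<t. P j (sorted_list_of_set C ! j))}"
proof -
  define f :: "nat \<Rightarrow> nat set \<Rightarrow> nat" where "f j C = sorted_list_of_set C ! j" for j C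
  define S where "S j = (\<lambda>C. f j C) ` F" for j
  define L where "L j = sorted_list_of_set (S j)" for j
  define m where "m = card F"
  have finC: "finite C" if "C \<in> F" for C
    using sub[OF that] finite_subset by blast
  have fmem: "f j C \<in> C" if "C \<in> F" "j < t" for C j
  proof -
    have "length (sorted_list_of_set C) = t" using sub[OF that(1)] by simp
    then show ?thesis unfolding f_def using that finC[OF that(1)]
      by (metis nth_mem set_sorted_list_of_set)
  qed
  have fless: "f j C < f (Suc j) C" if "C \<in> F" "Suc j < t" for C j
  proof -
    have "length (sorted_list_of_set C) = t" using sub[OF that(1)] by simp
    then show ?thesis unfolding f_def using that
      by (intro sorted_wrt_nth_less[OF strict_sorted_list_of_set]) auto
  qed
  have finj: "inj_on (f j) F" if "j < t" for j
  proof (rule inj_onI)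
    fix C D assume "C \<in> F" "D \<in> F" "f j C = f j D"
    then have "f j C \<in> C \<inter> D" using fmem[OF \<open>C \<in> F\<close> that] fmem[OF \<open>D \<in> F\<close> that] by simp
    then show "C = D" using disj \<open>C \<in> F\<close> \<open>D \<in> F\<close> by blast
  qed
  have finS: "finite (S j)" for j unfolding S_def using fin by simp
  have setL: "set (L j) = S j" for j unfolding L_def using finS by simp
  have sortL: "sorted_wrt (<) (L j)" for j unfolding L_def by simp
  have distL: "distinct (L j)" for j using sortL strict_sorted_iff by blast
  have sortedL: "sorted (L j)" for j using sortL strict_sorted_iff by blast
  have lenL: "length (L j) = m" if "j < t" for j
    unfolding L_def m_def using finS card_image[OF finj[OF that]] S_def by simp
  have inS: "\<exists>C\<in>F. L j ! k = f j C" if "k < m" "j < t" for j k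
  proof -
    have "L j ! k \<in> S j" using setL lenL[OF that(2)] that(1) by (metis nth_mem)
    then show ?thesis unfolding S_def by blast
  qed
  have key: "L j ! i < L (Suc j) ! i" if kt: "Suc j < t" "i < m" for j i
  proof (rule ccontr)
    assume "\<not> L j ! i < L (Suc j) ! i"
    then have yx: "L (Suc j) ! i \<le> L j ! i" by simp
    define G where "G = {C\<in>F. f (Suc j) C \<le> L (Suc j) ! i}"
    have jt: "j < t" using that by simp
    have finG: "finite G" unfolding G_def using fin by simp
    have A1: "(\<lambda>k. L (Suc j) ! k) ` {..i} \<subseteq> f (Suc j) ` G"
    proof
      fix z assume "z \<in> (\<lambda>k. L (Suc j) ! k) ` {..i}"
      then obtain k where k: "k \<le> i" "z = L (Suc j) ! k" by auto
      then have km: "k < m" using that by simp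
      obtain C where C: "C \<in> F" "L (Suc j) ! k = f (Suc j) C" using inS[OF km kt(1)] by blast
      have "L (Suc j) ! k \<le> L (Suc j) ! i"
        using sorted_nth_mono[OF sortedL k(1)] lenL[OF that(1)] that(2) by simp
      then show "z \<in> f (Suc j) ` G" using C k unfolding G_def by auto
    qed
    have "card ((\<lambda>k. L (Suc j) ! k) ` {..i}) = Suc i"
    proof -
      have "inj_on (\<lambda>k. L (Suc j) ! k) {..i}"
        using distL lenL[OF that(1)] that(2)
        by (intro inj_onI) (simp add: nth_eq_iff_index_eq)
      then show ?thesis by (simp add: card_image)
    qed
    moreover have "card (f (Suc j) ` G) \<le> card G" using card_image_le finG by blast
    moreover have "card G = card (f j ` G)"
      using card_image[OF inj_on_subset[OF finj[OF jt]]] G_def by auto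
    moreover have "f j ` G \<subseteq> (\<lambda>k. L j ! k) ` {..<i}"
    proof
      fix z assume "z \<in> f j ` G"
      then obtain C where C: "C \<in> F" "f (Suc j) C \<le> L (Suc j) ! i" "z = f j C"
        unfolding G_def by auto
      have zlt: "z < L j ! i" using fless[OF C(1) that(1)] C yx by simp
      have "z \<in> set (L j)" using setL C unfolding S_def by auto
      then obtain k where k: "k < m" "z = L j ! k" using lenL[OF jt] by (metis in_set_conv_nth)
      have "k < i"
      proof (rule ccontr)
        assume "\<not> k < i"
        then have "L j ! i \<le> L j ! k" using sorted_nth_mono[OF sortedL] lenL[OF jt] k by simp
        then show False using zlt k by simp
      qed
      then show "z \<in> (\<lambda>k. L j ! k) ` {..<i}" using k by auto
    qed
    then have "card (f j ` G) \<le> card ((\<lambda>k. L j ! k) ` {..<i})"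
      by (intro card_mono) auto
    moreover have "card ((\<lambda>k. L j ! k) ` {..<i}) \<le> i"
      using card_image_le[of "{..<i}"] by simp
    moreover have "card ((\<lambda>k. L (Suc j) ! k) ` {..i}) \<le> card (f (Suc j) ` G)"
      using A1 finG by (intro card_mono) auto
    ultimately show False by linarith
  qed
  define w where "w I = map (\<lambda>j. L j ! (sorted_list_of_set I ! j)) [0..<t]" for I :: "nat set"
  define Is where "Is = {I. I \<subseteq> {..<m} \<and> card I = t}"
  define Tg where "Tg = {C. C \<subseteq> {..<n} \<and> card C = t \<and> (\<forall>j<t. P j (sorted_list_of_set C ! j))}"
  have Iprops: "length (sorted_list_of_set I) = t" "sorted_wrt (<) (sorted_list_of_set I)"
    "\<forall>j<t. sorted_list_of_set I ! j < m" if "I \<in> Is" for I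
  proof -
    have fI: "finite I" using that Is_def finite_subset by auto
    show "length (sorted_list_of_set I) = t" using that Is_def by simp
    show "sorted_wrt (<) (sorted_list_of_set I)" by simp
    show "\<forall>j<t. sorted_list_of_set I ! j < m"
    proof (intro allI impI)
      fix j assume "j < t"
      then have "sorted_list_of_set I ! j \<in> set (sorted_list_of_set I)"
        using that Is_def by simp
      then show "sorted_list_of_set I ! j < m" using fI that Is_def by auto
    qed
  qed
  have wsort: "sorted_wrt (<) (w I)" if "I \<in> Is" for I
  proof -
    note ip = Iprops[OF that]
    have "\<forall>j. Suc j < length (w I) \<longrightarrow> w I ! j < w I ! Suc j"
    proof (intro allI impI)
      fix j assume "Suc j < length (w I)"
      then have jt: "Suc j < t" by (simp add: w_def)
      let ?a = "sorted_list_of_set I ! j" and ?b = "sorted_list_of_set I ! Suc j"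
      have ab: "?a < ?b" using sorted_wrt_nth_less[OF ip(2)] ip(1) jt by simp
      have bm: "?b < m" using ip(3) jt by simp
      have "L j ! ?a < L j ! ?b"
        using sorted_wrt_nth_less[OF sortL ab] lenL jt bm by simp
      also have "\<dots> < L (Suc j) ! ?b" using key[OF jt bm] .
      finally show "w I ! j < w I ! Suc j" using jt by (simp add: w_def)
    qed
    then show ?thesis by (simp add: sorted_wrt_iff_nth_Suc_transp)
  qed
  have slw: "sorted_list_of_set (set (w I)) = w I" if "I \<in> Is" for I
  proof -
    have "distinct (w I)" using wsort[OF that] strict_sorted_iff by blast
    then show ?thesis using wsort[OF that]
      by (subst sorted_list_of_set_unique[symmetric]) (auto simp: distinct_card)
  qed
  have inTg: "set (w I) \<in> Tg" if "I \<in> Is" for I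
  proof -
    note ip = Iprops[OF that]
    have lw: "length (w I) = t" by (simp add: w_def)
    have "distinct (w I)" using wsort[OF that] strict_sorted_iff by blast
    then have c: "card (set (w I)) = t" using lw distinct_card by metis
    have s: "set (w I) \<subseteq> {..<n}"
    proof
      fix z assume "z \<in> set (w I)"
      then obtain j where j: "j < t" "z = L j ! (sorted_list_of_set I ! j)"
        by (auto simp: w_def)
      obtain C where "C \<in> F" "z = f j C" using inS[OF _ j(1)] ip(3) j by metis
      then show "z \<in> {..<n}" using fmem[OF _ j(1)] sub by blast
    qed
    have "\<forall>j<t. P j (sorted_list_of_set (set (w I)) ! j)"
    proof (intro allI impI)
      fix j assume j: "j < t"
      obtain C where "C \<in> F" "L j ! (sorted_list_of_set I ! j) = f j C"
        using inS[OF _ j] ip(3) j by metis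
      then show "P j (sorted_list_of_set (set (w I)) ! j)"
        using slw[OF that] good j by (simp add: w_def f_def)
    qed
    then show ?thesis using c s Tg_def by simp
  qed
  have winj: "inj_on (\<lambda>I. set (w I)) Is"
  proof (rule inj_onI)
    fix I J assume IJ: "I \<in> Is" "J \<in> Is" "set (w I) = set (w J)"
    then have wIJ: "w I = w J" using slw by metis
    have "sorted_list_of_set I = sorted_list_of_set J"
    proof (rule nth_equalityI)
      show "length (sorted_list_of_set I) = length (sorted_list_of_set J)"
        using Iprops IJ by simp
      fix j assume "j < length (sorted_list_of_set I)"
      then have j: "j < t" using Iprops IJ by simp
      have "L j ! (sorted_list_of_set I ! j) = L j ! (sorted_list_of_set J ! j)"
        using wIJ j by (metis (no_types, lifting) w_def diff_zero length_upt nth_map nth_upt add_0)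
      then show "sorted_list_of_set I ! j = sorted_list_of_set J ! j"
        using nth_eq_iff_index_eq[OF distL] lenL[OF j] Iprops(3)[OF IJ(1)] Iprops(3)[OF IJ(2)] j
        by simp
    qed
    moreover have "finite I" "finite J" using IJ Is_def finite_subset by auto
    ultimately show "I = J" by (metis set_sorted_list_of_set)
  qed
  have finTg: "finite Tg" unfolding Tg_def
    by (rule finite_subset[of _ "Pow {..<n}"]) auto
  have "card Is \<le> card Tg"
    using card_inj_on_le[OF winj _ finTg] inTg by blast
  moreover have "card Is = m choose t" unfolding Is_def using n_subsets[of "{..<m}" t] by simp
  ultimately show ?thesis unfolding m_def Tg_def by simp
qed

lemma real_bound:
  fixes e x :: real and t :: nat
  assumes "t \<ge> 1" "e > 0" "x \<ge> 0"
  shows "(1 / (real t ^ t * (1 + (1/e)^t))) * x ^ t \<le> (e * x / real t) ^ t"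
proof -
  have tp: "real t ^ t > 0" using assms by simp
  have ep: "(1/e)^t > 0" using assms by simp
  have "real t ^ t * (1/e)^t \<le> real t ^ t * (1 + (1/e)^t)" using tp by simp
  then have "1 / (real t ^ t * (1 + (1/e)^t)) \<le> 1 / (real t ^ t * (1/e)^t)"
    using tp ep by (intro divide_left_mono) auto
  then have "(1 / (real t ^ t * (1 + (1/e)^t))) * x ^ t \<le> (1 / (real t ^ t * (1/e)^t)) * x ^ t"
    using assms by (intro mult_right_mono) auto
  also have "\<dots> = (e * x / real t) ^ t" using assms by (simp add: power_divide power_mult_distrib)
  finally show ?thesis .
qed

theorem mainTheorem7:
  fixes A :: "nat \<Rightarrow> nat \<Rightarrow> 'a" and s t :: nat
  shows "\<exists>p :: real poly. (\<forall>x>0. poly p x > 0) \<and>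
    (\<forall>\<epsilon>::real. \<epsilon> > 0 \<longrightarrow>
      (\<forall>(n::nat) (T :: nat \<Rightarrow> nat \<Rightarrow> 'a) (F :: nat set set).
        (\<forall>C\<in>F. is_copy A s t T n C) \<and>
        pairwise (\<lambda>C D. copy_entries s C \<inter> copy_entries s D = {}) F \<and>
        finite F \<and> real (card F) \<ge> \<epsilon> * real n
        \<longrightarrow> real (num_copies A s t T n) \<ge> (1 / poly p (1 / \<epsilon>)) * real n ^ t))"
proof (intro exI[of _ "smult (real t ^ t) (1 + monom 1 t)"] conjI allI impI)
  fix x :: real assume "x > 0"
  then show "poly (smult (real t ^ t) (1 + monom 1 t)) x > 0"
    by (cases "t = 0") (auto simp: poly_monom add_pos_pos)
next
  fix e :: real and n :: nat and T :: "nat \<Rightarrow> nat \<Rightarrow> 'a" and F :: "nat set set"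
  assume e: "e > 0"
  assume H: "(\<forall>C\<in>F. is_copy A s t T n C) \<and>
        pairwise (\<lambda>C D. copy_entries s C \<inter> copy_entries s D = {}) F \<and>
        finite F \<and> real (card F) \<ge> e * real n"
  have pp: "poly (smult (real t ^ t) (1 + monom 1 t)) (1/e) = real t ^ t * (1 + (1/e)^t)"
    by (simp add: poly_monom)
  have finCop: "finite {C. is_copy A s t T n C}"
    by (rule finite_subset[of _ "Pow {..<n}"]) (auto simp: is_copy_def)
  show "real (num_copies A s t T n) \<ge> (1 / poly (smult (real t ^ t) (1 + monom 1 t)) (1 / e)) * real n ^ t"
  proof (cases "t = 0")
    case True
    have "is_copy A s t T n {}" using True by (simp add: is_copy_def)
    then have "1 \<le> num_copies A s t T n" unfolding num_copies_def
      using finCop by (metis (mono_tags) Collect_empty_eq card_0_eq less_one not_le)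
    then show ?thesis using True pp by simp
  next
    case False
    then have t1: "t \<ge> 1" by simp
    have RB: "(1 / poly (smult (real t ^ t) (1 + monom 1 t)) (1 / e)) * real n ^ t \<le> (e * real n / real t) ^ t"
      unfolding pp by (rule real_bound[OF t1 e]) simp
    show ?thesis
    proof (cases "s = 0")
      case True
      have cop: "{C. is_copy A s t T n C} = {C. C \<subseteq> {..<n} \<and> card C = t}"
        using True by (auto simp: is_copy_def)
      show ?thesis
      proof (cases "t \<le> n")
        case True
        have "(1 / poly (smult (real t ^ t) (1 + monom 1 t)) (1 / e)) * real n ^ t \<le> real n ^ t / real t ^ t"
        proof -
          have "real t ^ t \<le> real t ^ t * (1 + (1/e)^t)"
            using mult_left_mono[of 1 "1 + (1/e)^t" "real t ^ t"] e by simp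
          then have "1 / (real t ^ t * (1 + (1/e)^t)) \<le> 1 / real t ^ t"
            using t1 by (intro divide_left_mono) auto
          then have "1 / (real t ^ t * (1 + (1/e)^t)) * real n ^ t \<le> 1 / real t ^ t * real n ^ t"
            by (intro mult_right_mono) auto
          then show ?thesis unfolding pp by simp
        qed
        also have "\<dots> = (real n / real t) ^ t" by (simp add: power_divide)
        also have "\<dots> \<le> real (n choose t)" using binomial_ge_n_over_k_pow_k[OF True] by simp
        also have "n choose t = num_copies A s t T n"
          unfolding num_copies_def cop using n_subsets[of "{..<n}" t] by simp
        finally show ?thesis by simp
      next
        case False
        have "F = {}"
        proof (rule ccontr)
          assume "F \<noteq> {}"
          then obtain C where "C \<in> F" by auto
          then have "C \<subseteq> {..<n}" "card C = t" using H by (auto simp: is_copy_def)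
          then show False using False card_mono[of "{..<n}" C] by simp
        qed
        then have "e * real n \<le> 0" using H by simp
        then have "n = 0" using e by (simp add: mult_le_0_iff)
        then show ?thesis using t1 by (simp add: power_0_left)
      qed
    next
      case False
      define m where "m = card F"
      have disj: "C \<inter> D = {}" if "C \<in> F" "D \<in> F" "C \<noteq> D" for C D
      proof -
        have "copy_entries s C \<inter> copy_entries s D = {}"
          using H that unfolding pairwise_def by blast
        then show ?thesis using False unfolding copy_entries_def by auto
      qed
      have cc: "m choose t \<le> card {C. C \<subseteq> {..<n} \<and> card C = t \<and> (\<forall>j<t. (\<lambda>j x. \<forall>i<s. T i x = A i j) j (sorted_list_of_set C ! j))}"
        unfolding m_def
        by (rule comb_count) (use H disj in \<open>auto simp: is_copy_def\<close>)
      have cnt: "m choose t \<le> num_copies A s t T n"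
      proof -
        have "{C. C \<subseteq> {..<n} \<and> card C = t \<and> (\<forall>j<t. (\<lambda>j x. \<forall>i<s. T i x = A i j) j (sorted_list_of_set C ! j))} = {C. is_copy A s t T n C}"
          unfolding is_copy_def by blast
        then show ?thesis using cc unfolding num_copies_def by simp
      qed
      have em: "e * real n \<le> real m" using H m_def by simp
      have le2: "(e * real n / real t) ^ t \<le> (real m / real t) ^ t"
        using em e t1 by (intro power_mono divide_right_mono) auto
      show ?thesis
      proof (cases "t \<le> m")
        case True
        have "(real m / real t) ^ t \<le> real (m choose t)" using binomial_ge_n_over_k_pow_k[OF True] by simp
        then show ?thesis using RB le2 cnt by linarith
      next
        case nm: False
        show ?thesis
        proof (cases "m = 0")
          case True
          then have "e * real n \<le> 0" using em by simp
          then have "n = 0" using e by (simp add: mult_le_0_iff)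
          then show ?thesis using t1 by (simp add: power_0_left)
        next
          case False
          then obtain C where C: "C \<in> F" using m_def by fastforce
          then have "is_copy A s t T n C" using H by auto
          then have "1 \<le> num_copies A s t T n" unfolding num_copies_def
            using finCop by (metis (mono_tags) Collect_empty_eq card_0_eq less_one not_le)
          moreover have "(real m / real t) ^ t \<le> 1"
            using nm t1 by (intro power_le_one) auto
          ultimately show ?thesis using RB le2 by linarith
        qed
      qed
    qed
  qed
qed

end
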